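(* Let $q\in\mathbb{C}$, $|q|<1$, $\ell\in\mathbb{N}$ and $\alpha_j,\beta_j\in\mathbb{N}$ for $j=1,\dots,\ell$. In $\mathbb{Q}\langle\pi,y\rangle$ consider $$X=(\pi-\mathbf{1})^{\alpha_1-1}\rho\,y^{\beta_1}(\pi-\mathbf{1})^{\alpha_2}y^{\beta_2}\cdots(\pi-\mathbf{1})^{\alpha_\ell}y^{\beta_\ell},\quad X^\vee=(\pi-\mathbf{1})^{\beta_\ell-1}\rho\,y^{\alpha_\ell}(\pi-\mathbf{1})^{\beta_{\ell-1}}y^{\alpha_{\ell-1}}\cdots(\pi-\mathbf{1})^{\beta_1}y^{\alpha_1}.$$ Then $\mathfrak{z}_q^{\mathrm{III}}[X]=\mathfrak{z}_q^{\mathrm{III}}[X^\vee]$.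
   Context: $\mathbb{Q}\langle\pi,y\rangle$ is the free noncommutative $\mathbb{Q}$-algebra on $\pi,y$, $\mathbf{1}$ its unit, $\rho:=\pi-\mathbf{1}$. For $\mathbf{s}=(s_1,\dots,s_d)$ with $s_1\ge1$, $s_j\ge0$, let $W(\mathbf{s})=\pi^{s_1-1}\rho y\pi^{s_2}y\cdots\pi^{s_d}y$ and $\mathfrak{z}_q^{\mathrm{III}}[\mathbf{s}]=\sum_{k_1>\dots>k_d>0}\frac{q^{k_1}}{\prod_j(1-q^{k_j})^{s_j}}$. $\mathfrak{z}_q^{\mathrm{III}}$ is extended to the $\mathbb{Q}$-span of the elements $W(\mathbf{s})$ linearly by $\mathfrak{z}_q^{\mathrm{III}}[W(\mathbf{s})]=\mathfrak{z}_q^{\mathrm{III}}[\mathbf{s}]$; expanding the powers of $\pi-\mathbf{1}$ shows $X,X^\vee$ lie in this span. *)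

theory Defs
  imports "HOL-Analysis.Analysis"
begin

text \<open>The free noncommutative Q-algebra Q<pi,y>: elements are finitely supported
  functions from words over the alphabet {pi, y} to rationals; multiplication is
  concatenation-convolution.\<close>

datatype letter = LPi | LY

type_synonym ncpoly = "letter list \<Rightarrow> rat"

definition ncpoly_fin :: "ncpoly \<Rightarrow> bool" where
  "ncpoly_fin p \<longleftrightarrow> finite {w. p w \<noteq> 0}"

definition ncadd :: "ncpoly \<Rightarrow> ncpoly \<Rightarrow> ncpoly" where
  "ncadd p r = (\<lambda>w. p w + r w)"

definition ncsub :: "ncpoly \<Rightarrow> ncpoly \<Rightarrow> ncpoly" where
  "ncsub p r = (\<lambda>w. p w - r w)"

definition ncmult :: "ncpoly \<Rightarrow> ncpoly \<Rightarrow> ncpoly" where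
  "ncmult p r = (\<lambda>w. \<Sum>i\<le>length w. p (take i w) * r (drop i w))"

definition ncone :: ncpoly where
  "ncone = (\<lambda>w. if w = [] then 1 else 0)"

definition ncpi :: ncpoly where
  "ncpi = (\<lambda>w. if w = [LPi] then 1 else 0)"

definition ncy :: ncpoly where
  "ncy = (\<lambda>w. if w = [LY] then 1 else 0)"

definition ncrho :: ncpoly where
  "ncrho = ncsub ncpi ncone"

definition ncpow :: "ncpoly \<Rightarrow> nat \<Rightarrow> ncpoly" where
  "ncpow p n = ((ncmult p) ^^ n) ncone"

definition ncprod :: "ncpoly list \<Rightarrow> ncpoly" where
  "ncprod ps = foldr ncmult ps ncone"

definition admissible :: "nat list \<Rightarrow> bool" where
  "admissible s \<longleftrightarrow> s \<noteq> [] \<and> hd s \<ge> 1"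

definition Wword :: "nat list \<Rightarrow> ncpoly" where
  "Wword s = ncprod ([ncpow ncpi (hd s - 1), ncrho, ncy]
                     @ concat (map (\<lambda>k. [ncpow ncpi k, ncy]) (tl s)))"

definition zIII_series :: "complex \<Rightarrow> nat list \<Rightarrow> complex" where
  "zIII_series q s =
     infsum (\<lambda>ks. q ^ (hd ks) / (\<Prod>j<length s. (1 - q ^ (ks ! j)) ^ (s ! j)))
       {ks. length ks = length s \<and> sorted_wrt (>) ks \<and> (\<forall>k\<in>set ks. k > 0)}"

definition zIII :: "complex \<Rightarrow> ncpoly \<Rightarrow> complex" where
  "zIII q v = (SOME r. \<exists>c :: nat list \<Rightarrow> rat.
      finite {s. c s \<noteq> 0} \<and> (\<forall>s. c s \<noteq> 0 \<longrightarrow> admissible s) \<and>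
      v = (\<lambda>w. \<Sum>s\<in>{s. c s \<noteq> 0}. c s * Wword s w) \<and>
      r = (\<Sum>s\<in>{s. c s \<noteq> 0}. of_rat (c s) * zIII_series q s))"

end

theory Submission
  imports Defs
begin


definition delta :: "letter list \<Rightarrow> ncpoly" where
  "delta v = (\<lambda>w. if w = v then 1 else 0)"

definition lmul :: "letter \<Rightarrow> ncpoly \<Rightarrow> ncpoly" where
  "lmul x M = (\<lambda>w. case w of [] \<Rightarrow> 0 | a # w' \<Rightarrow> if a = x then M w' else 0)"

lemma ncpi_delta: "ncpi = delta [LPi]" by (simp add: ncpi_def delta_def)
lemma ncy_delta: "ncy = delta [LY]" by (simp add: ncy_def delta_def)
lemma ncone_delta: "ncone = delta []" by (simp add: ncone_def delta_def)

lemma ncmult_letter: "ncmult (delta [x]) M = lmul x M"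
proof (rule ext)
  fix w
  show "ncmult (delta [x]) M w = lmul x M w"
  proof (cases w)
    case Nil
    then show ?thesis by (simp add: ncmult_def delta_def lmul_def)
  next
    case (Cons a w')
    have "ncmult (delta [x]) M w = (\<Sum>i\<le>Suc (length w'). delta [x] (take i w) * M (drop i w))"
      unfolding ncmult_def using Cons by simp
    also have "\<dots> = delta [x] (take 0 w) * M (drop 0 w) + (\<Sum>i\<le>length w'. delta [x] (take (Suc i) w) * M (drop (Suc i) w))"
      by (rule sum.atMost_Suc_shift)
    also have "\<dots> = (\<Sum>i\<le>length w'. delta [x] (take (Suc i) w) * M (drop (Suc i) w))"
      by (simp add: delta_def)
    also have "\<dots> = (\<Sum>i\<le>length w'. if i = 0 then (if a = x then M w' else 0) else 0)"
      by (rule sum.cong) (auto simp: Cons delta_def)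
    also have "\<dots> = lmul x M w" by (simp add: lmul_def Cons)
    finally show ?thesis .
  qed
qed

lemma ncmult_one: "ncmult ncone M = M"
proof (rule ext)
  fix w
  have "ncmult ncone M w = (\<Sum>i\<le>length w. if i = 0 then M w else 0)"
    unfolding ncmult_def ncone_def by (rule sum.cong) auto
  then show "ncmult ncone M w = M w" by simp
qed

lemma ncmult_sub_left: "ncmult (ncsub P R) M = ncsub (ncmult P M) (ncmult R M)"
  unfolding ncmult_def ncsub_def by (auto simp: algebra_simps sum_subtractf)

lemma ncmult_rho: "ncmult ncrho M = ncsub (lmul LPi M) M"
  unfolding ncrho_def ncmult_sub_left ncpi_delta ncmult_letter ncmult_one ..

lemma lmul_assoc: "ncmult (lmul x R) M = lmul x (ncmult R M)"
proof (rule ext)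
  fix w
  show "ncmult (lmul x R) M w = lmul x (ncmult R M) w"
  proof (cases w)
    case Nil
    then show ?thesis by (simp add: ncmult_def lmul_def)
  next
    case (Cons a w')
    have "ncmult (lmul x R) M w = (\<Sum>i\<le>Suc (length w'). lmul x R (take i w) * M (drop i w))"
      unfolding ncmult_def using Cons by simp
    also have "\<dots> = lmul x R (take 0 w) * M (drop 0 w) + (\<Sum>i\<le>length w'. lmul x R (take (Suc i) w) * M (drop (Suc i) w))"
      by (rule sum.atMost_Suc_shift)
    also have "\<dots> = (\<Sum>i\<le>length w'. lmul x R (take (Suc i) w) * M (drop (Suc i) w))"
      by (simp add: lmul_def)
    also have "\<dots> = lmul x (ncmult R M) w"
      by (auto simp: lmul_def Cons ncmult_def)
    finally show ?thesis .
  qed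
qed

definition rmul :: "ncpoly \<Rightarrow> ncpoly" where
  "rmul M = ncsub (lmul LPi M) M"

lemma lmul_sub: "lmul x (ncsub A B) = ncsub (lmul x A) (lmul x B)"
  unfolding lmul_def ncsub_def by (auto split: list.splits)

lemma rmul_assoc: "ncmult (rmul R) M = rmul (ncmult R M)"
  unfolding rmul_def ncmult_sub_left lmul_assoc ..

lemma ncmult_rho': "ncmult ncrho M = rmul M"
  by (simp add: ncmult_rho rmul_def)

lemma ncpow_Suc: "ncpow P (Suc k) = ncmult P (ncpow P k)"
  by (simp add: ncpow_def)

lemma ncpow_pi: "ncmult (ncpow ncpi k) M = (lmul LPi ^^ k) M"
  by (induction k) (simp_all add: ncpow_def ncmult_one ncpi_delta ncmult_letter lmul_assoc)

lemma ncpow_y: "ncmult (ncpow ncy k) M = (lmul LY ^^ k) M"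
  by (induction k) (simp_all add: ncpow_def ncmult_one ncy_delta ncmult_letter lmul_assoc)

lemma ncpow_rho: "ncmult (ncpow ncrho k) M = (rmul ^^ k) M"
  by (induction k) (simp_all add: ncpow_def ncmult_one ncmult_rho' rmul_assoc)

lemma rho_eq: "ncsub ncpi ncone = ncrho" by (simp add: ncrho_def)

lemma lmul_rmul_comm: "lmul LPi (rmul M) = rmul (lmul LPi M)"
  unfolding rmul_def lmul_sub ..

lemma funpow_lmul_rmul: "(lmul LPi ^^ k) (rmul M) = rmul ((lmul LPi ^^ k) M)"
  by (induction k) (simp_all add: lmul_rmul_comm)

lemma lmul_delta: "lmul x (delta v) = delta (x # v)"
  unfolding lmul_def delta_def by (auto split: list.splits)

lemma funpow_lmul_delta: "(lmul x ^^ k) (delta v) = delta (replicate k x @ v)"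
  by (induction k) (simp_all add: lmul_delta)


lemma lmul_supp: "{w. lmul x M w \<noteq> 0} \<subseteq> Cons x ` {w. M w \<noteq> 0}"
proof
  fix w assume "w \<in> {w. lmul x M w \<noteq> 0}"
  then obtain w' where "w = x # w'" "M w' \<noteq> 0"
    by (cases w) (auto simp: lmul_def split: if_splits)
  then show "w \<in> Cons x ` {w. M w \<noteq> 0}" by auto
qed

lemma fin_lmul: "ncpoly_fin M \<Longrightarrow> ncpoly_fin (lmul x M)"
proof -
  assume "ncpoly_fin M"
  have "{w. lmul x M w \<noteq> 0} \<subseteq> Cons x ` {w. M w \<noteq> 0}"
    by (rule lmul_supp)
  then show ?thesis using \<open>ncpoly_fin M\<close> unfolding ncpoly_fin_def
    by (meson finite_imageI finite_subset)
qed

lemma fin_sub: "ncpoly_fin A \<Longrightarrow> ncpoly_fin B \<Longrightarrow> ncpoly_fin (ncsub A B)"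
proof -
  assume a: "ncpoly_fin A" "ncpoly_fin B"
  have "{w. ncsub A B w \<noteq> 0} \<subseteq> {w. A w \<noteq> 0} \<union> {w. B w \<noteq> 0}"
    by (auto simp: ncsub_def)
  then show ?thesis using a unfolding ncpoly_fin_def by (meson finite_UnI finite_subset)
qed

lemma fin_rmul: "ncpoly_fin M \<Longrightarrow> ncpoly_fin (rmul M)"
  by (simp add: rmul_def fin_sub fin_lmul)

lemma fin_delta: "ncpoly_fin (delta v)"
proof -
  have "{w. delta v w \<noteq> 0} \<subseteq> {v}" by (auto simp: delta_def)
  then show ?thesis unfolding ncpoly_fin_def by (meson finite.emptyI finite_insert finite_subset)
qed

lemma fin_one: "ncpoly_fin ncone" by (simp add: ncone_delta fin_delta)

lemma fin_funpow_lmul: "ncpoly_fin M \<Longrightarrow> ncpoly_fin ((lmul x ^^ k) M)"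
  by (induction k) (simp_all add: fin_lmul)

lemma fin_funpow_rmul: "ncpoly_fin M \<Longrightarrow> ncpoly_fin ((rmul ^^ k) M)"
  by (induction k) (simp_all add: fin_rmul)

definition gN :: "nat \<Rightarrow> complex \<Rightarrow> nat \<Rightarrow> complex" where
  "gN N q K = (\<Sum>m=1..N. q ^ (K * m))"

definition aop :: "nat \<Rightarrow> complex \<Rightarrow> nat \<Rightarrow> (nat \<Rightarrow> complex) \<Rightarrow> nat \<Rightarrow> complex" where
  "aop N q T h = (\<lambda>S. \<Sum>m=1..N. q ^ (T * m) * h (S + m))"

definition piop :: "nat \<Rightarrow> complex \<Rightarrow> (nat \<Rightarrow> complex) \<Rightarrow> nat \<Rightarrow> complex" where
  "piop N q h = (\<lambda>S. h S + aop N q 0 h S)"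

definition yop :: "nat \<Rightarrow> complex \<Rightarrow> (nat \<Rightarrow> complex) \<Rightarrow> nat \<Rightarrow> complex" where
  "yop N q h = (\<lambda>S. (\<Sum>u=1..N. q ^ (S * u)) * h S)"

fun Vc :: "nat \<Rightarrow> complex \<Rightarrow> letter list \<Rightarrow> (nat \<Rightarrow> complex) \<Rightarrow> nat \<Rightarrow> complex" where
  "Vc N q [] h = h"
| "Vc N q (LPi # w) h = piop N q (Vc N q w h)"
| "Vc N q (LY # w) h = yop N q (Vc N q w h)"

definition Lc :: "nat \<Rightarrow> complex \<Rightarrow> ncpoly \<Rightarrow> (nat \<Rightarrow> complex) \<Rightarrow> nat \<Rightarrow> complex" where
  "Lc N q p h S = (\<Sum>w\<in>{w. p w \<noteq> 0}. of_rat (p w) * Vc N q w h S)"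

lemma Lc_superset:
  assumes "finite A" "{w. p w \<noteq> 0} \<subseteq> A"
  shows "Lc N q p h S = (\<Sum>w\<in>A. of_rat (p w) * Vc N q w h S)"
  unfolding Lc_def by (rule sum.mono_neutral_left) (use assms in auto)

lemma Lc_sub:
  assumes "ncpoly_fin A" "ncpoly_fin B"
  shows "Lc N q (ncsub A B) h S = Lc N q A h S - Lc N q B h S"
proof -
  let ?U = "{w. A w \<noteq> 0} \<union> {w. B w \<noteq> 0}"
  have f: "finite ?U" using assms by (simp add: ncpoly_fin_def)
  have "Lc N q (ncsub A B) h S = (\<Sum>w\<in>?U. of_rat (ncsub A B w) * Vc N q w h S)"
    by (rule Lc_superset[OF f]) (auto simp: ncsub_def)
  also have "\<dots> = (\<Sum>w\<in>?U. of_rat (A w) * Vc N q w h S) - (\<Sum>w\<in>?U. of_rat (B w) * Vc N q w h S)"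
    by (simp add: ncsub_def of_rat_diff algebra_simps sum_subtractf)
  also have "\<dots> = Lc N q A h S - Lc N q B h S"
    using Lc_superset[OF f, of A] Lc_superset[OF f, of B] by auto
  finally show ?thesis .
qed

lemma Lc_lmul_raw:
  assumes "ncpoly_fin M"
  shows "Lc N q (lmul x M) h S = (\<Sum>w\<in>{w. M w \<noteq> 0}. of_rat (M w) * Vc N q (x # w) h S)"
proof -
  have f: "finite (Cons x ` {w. M w \<noteq> 0})" using assms by (simp add: ncpoly_fin_def)
  have "Lc N q (lmul x M) h S = (\<Sum>w\<in>Cons x ` {w. M w \<noteq> 0}. of_rat (lmul x M w) * Vc N q w h S)"
    by (rule Lc_superset[OF f]) (rule lmul_supp)
  also have "\<dots> = (\<Sum>w\<in>{w. M w \<noteq> 0}. of_rat (M w) * Vc N q (x # w) h S)"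
    by (subst sum.reindex) (auto simp: lmul_def)
  finally show ?thesis .
qed

lemma aop_sum: "aop N q T (\<lambda>S. \<Sum>w\<in>F. c w * g w S) S = (\<Sum>w\<in>F. c w * aop N q T (g w) S)"
  unfolding aop_def
  apply (simp only: sum_distrib_left)
  apply (subst sum.swap)
  apply (simp add: mult.left_commute)
  done

lemma piop_sum: "piop N q (\<lambda>S. \<Sum>w\<in>F. c w * g w S) S = (\<Sum>w\<in>F. c w * piop N q (g w) S)"
  unfolding piop_def aop_sum by (simp add: sum.distrib algebra_simps)

lemma yop_sum: "yop N q (\<lambda>S. \<Sum>w\<in>F. c w * g w S) S = (\<Sum>w\<in>F. c w * yop N q (g w) S)"
  unfolding yop_def by (simp add: sum_distrib_left sum_distrib_right mult.left_commute)

lemma Lc_eta: "Lc N q M h = (\<lambda>S. \<Sum>w\<in>{w. M w \<noteq> 0}. of_rat (M w) * Vc N q w h S)"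
  by (rule ext) (simp add: Lc_def)

lemma Lc_lmul_pi: "ncpoly_fin M \<Longrightarrow> Lc N q (lmul LPi M) h = piop N q (Lc N q M h)"
  by (rule ext) (simp add: Lc_lmul_raw Lc_eta[of N q M h] piop_sum)

lemma Lc_lmul_y: "ncpoly_fin M \<Longrightarrow> Lc N q (lmul LY M) h = yop N q (Lc N q M h)"
  by (rule ext) (simp add: Lc_lmul_raw Lc_eta[of N q M h] yop_sum)

lemma Lc_rmul: "ncpoly_fin M \<Longrightarrow> Lc N q (rmul M) h = aop N q 0 (Lc N q M h)"
  by (rule ext) (simp add: rmul_def Lc_sub fin_lmul Lc_lmul_pi piop_def)

lemma Lc_delta: "Lc N q (delta v) h S = Vc N q v h S"
  by (subst Lc_superset[of "{v}"]) (auto simp: delta_def)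

lemma Lc_one: "Lc N q ncone h = h"
  by (rule ext) (simp add: ncone_delta Lc_delta)

lemma Lc_funpow_pi: "ncpoly_fin M \<Longrightarrow> Lc N q ((lmul LPi ^^ k) M) h = (piop N q ^^ k) (Lc N q M h)"
  by (induction k) (simp_all add: Lc_lmul_pi fin_funpow_lmul)

lemma Lc_funpow_y: "ncpoly_fin M \<Longrightarrow> Lc N q ((lmul LY ^^ k) M) h = (yop N q ^^ k) (Lc N q M h)"
  by (induction k) (simp_all add: Lc_lmul_y fin_funpow_lmul)

lemma Lc_funpow_rho: "ncpoly_fin M \<Longrightarrow> Lc N q ((rmul ^^ k) M) h = (aop N q 0 ^^ k) (Lc N q M h)"
  by (induction k) (simp_all add: Lc_rmul fin_funpow_rmul)


fun Qc :: "nat \<Rightarrow> complex \<Rightarrow> bool list \<Rightarrow> nat \<Rightarrow> (nat \<Rightarrow> complex) \<Rightarrow> nat \<Rightarrow> complex" where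
  "Qc N q [] T h = h"
| "Qc N q (True # c) T h = aop N q T (Qc N q c T h)"
| "Qc N q (False # c) T h = yop N q (Qc N q c T h)"

lemma Qc_append: "Qc N q (c @ d) T h = Qc N q c T (Qc N q d T h)"
proof (induction c)
  case (Cons b c) then show ?case by (cases b) auto
qed simp

lemma Qc_scale: "Qc N q c T (\<lambda>S. k * h S) = (\<lambda>S. k * Qc N q c T h S)"
proof (induction c)
  case Nil then show ?case by simp
next
  case (Cons b c) then show ?case
    by (cases b) (auto simp: aop_def yop_def sum_distrib_left mult.left_commute)
qed

lemma Qc_sum: "Qc N q c T (\<lambda>S. \<Sum>u\<in>F. g u S) = (\<lambda>S. \<Sum>u\<in>F. Qc N q c T (g u) S)"
proof (induction c)
  case Nil then show ?case by simp
next
  case (Cons b c)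
  show ?case
  proof (cases b)
    case True
    then show ?thesis using Cons
      using aop_sum[of N q T "\<lambda>_. 1" "\<lambda>u. Qc N q c T (g u)" F] by auto
  next
    case False
    then show ?thesis using Cons
      using yop_sum[of N q "\<lambda>_. 1" "\<lambda>u. Qc N q c T (g u)" F] by auto
  qed
qed

lemma Qc_exp: "Qc N q c T (\<lambda>S'. q ^ (S' * u) * h S') = (\<lambda>S. q ^ (S * u) * Qc N q c (T + u) h S)"
proof (induction c)
  case Nil then show ?case by simp
next
  case (Cons b c)
  show ?case
  proof (cases b)
    case True
    show ?thesis using Cons True
      apply (simp add: aop_def sum_distrib_left)
      apply (rule ext, rule sum.cong, simp)
      apply (simp add: power_add add_mult_distrib add_mult_distrib2 mult.commute mult.left_commute)
      done
  next
    case False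
    then show ?thesis using Cons by (simp add: yop_def mult.left_commute)
  qed
qed

definition QQ :: "nat \<Rightarrow> complex \<Rightarrow> bool list \<Rightarrow> nat \<Rightarrow> nat \<Rightarrow> complex" where
  "QQ N q c S T = Qc N q c T (\<lambda>_. 1) S"

lemma QQ_snoc_False: "QQ N q (c @ [False]) S T = (\<Sum>u=1..N. q ^ (S * u) * QQ N q c S (T + u))"
proof -
  have "yop N q (\<lambda>_. 1) = (\<lambda>S. \<Sum>u=1..N. q ^ (S * u) * 1)"
    by (simp add: yop_def)
  then have "QQ N q (c @ [False]) S T = Qc N q c T (\<lambda>S. \<Sum>u=1..N. q ^ (S * u) * 1) S"
    by (simp add: QQ_def Qc_append)
  also have "\<dots> = (\<Sum>u=1..N. Qc N q c T (\<lambda>S. q ^ (S * u) * 1) S)"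
    by (simp only: Qc_sum)
  also have "\<dots> = (\<Sum>u=1..N. q ^ (S * u) * QQ N q c S (T + u))"
    by (simp only: Qc_exp QQ_def)
  finally show ?thesis .
qed

lemma QQ_snoc_True: "QQ N q (c @ [True]) S T = (\<Sum>m=1..N. q ^ (T * m)) * QQ N q c S T"
proof -
  have "aop N q T (\<lambda>_. 1) = (\<lambda>S. (\<Sum>m=1..N. q ^ (T * m)) * 1)"
    by (simp add: aop_def)
  then have "QQ N q (c @ [True]) S T = Qc N q c T (\<lambda>S. (\<Sum>m=1..N. q ^ (T * m)) * 1) S"
    by (simp add: QQ_def Qc_append)
  also have "\<dots> = (\<Sum>m=1..N. q ^ (T * m)) * QQ N q c S T"
    by (simp only: Qc_scale QQ_def)
  finally show ?thesis .
qed

lemma QQ_duality: "QQ N q (rev (map Not c)) S T = QQ N q c T S"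
proof (induction c arbitrary: S T)
  case Nil then show ?case by (simp add: QQ_def)
next
  case (Cons b c)
  show ?case
  proof (cases b)
    case True
    then show ?thesis using Cons
      by (simp add: QQ_snoc_False) (simp add: QQ_def aop_def)
  next
    case False
    then show ?thesis using Cons
      by (simp add: QQ_snoc_True) (simp add: QQ_def yop_def)
  qed
qed


lemma Qc_rep: "Qc N q (replicate k b @ d) T h = ((if b then aop N q T else yop N q) ^^ k) (Qc N q d T h)"
  by (induction k) (cases b; simp)+

definition wrest :: "(nat \<Rightarrow> nat) \<Rightarrow> (nat \<Rightarrow> nat) \<Rightarrow> nat list \<Rightarrow> bool list" where
  "wrest A B js = concat (map (\<lambda>j. replicate (A j) True @ replicate (B j) False) js)"

definition prest :: "(nat \<Rightarrow> nat) \<Rightarrow> (nat \<Rightarrow> nat) \<Rightarrow> nat list \<Rightarrow> ncpoly" where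
  "prest A B js = ncprod (concat (map (\<lambda>j. [ncpow ncrho (A j), ncpow ncy (B j)]) js))"

lemma prest_Cons: "prest A B (j # js) = (rmul ^^ A j) ((lmul LY ^^ B j) (prest A B js))"
  by (simp add: prest_def ncprod_def ncpow_rho ncpow_y)

lemma prest_Nil: "prest A B [] = ncone"
  by (simp add: prest_def ncprod_def)

lemma fin_prest: "ncpoly_fin (prest A B js)"
  by (induction js) (simp_all add: prest_Nil prest_Cons fin_one fin_funpow_rmul fin_funpow_lmul)

lemma Lc_prest: "Lc N q (prest A B js) h = Qc N q (wrest A B js) 0 h"
proof (induction js)
  case Nil then show ?case by (simp add: prest_Nil wrest_def Lc_one)
next
  case (Cons j js)
  have "Lc N q (prest A B (j # js)) h = (aop N q 0 ^^ A j) ((yop N q ^^ B j) (Lc N q (prest A B js) h))"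
    by (simp add: prest_Cons Lc_funpow_rho Lc_funpow_y fin_funpow_lmul fin_prest)
  also have "\<dots> = Qc N q (wrest A B (j # js)) 0 h"
    using Cons by (simp add: wrest_def Qc_rep)
  finally show ?case .
qed

definition bigP :: "nat \<Rightarrow> nat \<Rightarrow> (nat \<Rightarrow> nat) \<Rightarrow> (nat \<Rightarrow> nat) \<Rightarrow> nat list \<Rightarrow> ncpoly" where
  "bigP a b A B js = ncprod ([ncpow (ncsub ncpi ncone) (a - 1), ncrho, ncpow ncy b]
            @ concat (map (\<lambda>j. [ncpow (ncsub ncpi ncone) (A j), ncpow ncy (B j)]) js))"

lemma bigP_eq: "bigP a b A B js = (rmul ^^ (a - 1)) (rmul ((lmul LY ^^ b) (prest A B js)))"
  by (simp add: bigP_def rho_eq ncprod_def prest_def ncpow_rho ncpow_y ncmult_rho')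

lemma Lc_bigP: "Lc N q (bigP a b A B js) h =
   Qc N q (replicate (a - 1) True @ [True] @ replicate b False @ wrest A B js) 0 h"
  by (simp add: bigP_eq Lc_funpow_rho Lc_rmul Lc_funpow_y fin_funpow_lmul fin_prest
       fin_rmul fin_funpow_rmul Qc_rep Lc_prest)


definition enc :: "nat list \<Rightarrow> letter list" where
  "enc t = concat (map (\<lambda>k. replicate k LPi @ [LY]) t)"

lemma enc_Nil[simp]: "enc [] = []" by (simp add: enc_def)
lemma enc_Cons: "enc (k # t) = replicate k LPi @ LY # enc t" by (simp add: enc_def)

lemma rep_LY_inj: "replicate k LPi @ LY # u = replicate k' LPi @ LY # u' \<Longrightarrow> k = k' \<and> u = u'"
proof (induction k arbitrary: k')
  case 0 then show ?case by (cases k') auto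
next
  case (Suc k) then show ?case by (cases k') auto
qed

lemma enc_inj: "enc t = enc t' \<Longrightarrow> t = t'"
proof (induction t arbitrary: t')
  case Nil then show ?case by (cases t') (auto simp: enc_Cons)
next
  case (Cons k t) then show ?case
    by (cases t') (auto simp: enc_Cons dest!: rep_LY_inj)
qed

definition good :: "ncpoly \<Rightarrow> bool" where
  "good M \<longleftrightarrow> (\<forall>w. M w \<noteq> 0 \<longrightarrow> (\<exists>t. t \<noteq> [] \<and> w = enc t))"

definition wgood :: "ncpoly \<Rightarrow> bool" where
  "wgood M \<longleftrightarrow> (\<forall>w. M w \<noteq> 0 \<longrightarrow> (\<exists>t. w = enc t))"

lemma good_wgood: "good M \<Longrightarrow> wgood M"
  by (auto simp: good_def wgood_def)

lemma wgood_one: "wgood ncone"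
  by (auto simp: wgood_def ncone_def intro: exI[of _ "[]"])

lemma good_lmul_pi: "good M \<Longrightarrow> good (lmul LPi M)"
  unfolding good_def
proof (intro allI impI)
  fix w assume g: "\<forall>w. M w \<noteq> 0 \<longrightarrow> (\<exists>t. t \<noteq> [] \<and> w = enc t)" and nz: "lmul LPi M w \<noteq> 0"
  then obtain w' where w: "w = LPi # w'" "M w' \<noteq> 0"
    by (cases w) (auto simp: lmul_def split: if_splits)
  then obtain t where "t \<noteq> []" "w' = enc t" using g by blast
  then obtain k t' where "w' = enc (k # t')" by (cases t) auto
  then have "w = enc (Suc k # t')" using w by (simp add: enc_Cons)
  then show "\<exists>t. t \<noteq> [] \<and> w = enc t" by blast
qed

lemma good_lmul_y: "wgood M \<Longrightarrow> good (lmul LY M)"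
  unfolding good_def
proof (intro allI impI)
  fix w assume g: "wgood M" and nz: "lmul LY M w \<noteq> 0"
  then obtain w' where w: "w = LY # w'" "M w' \<noteq> 0"
    by (cases w) (auto simp: lmul_def split: if_splits)
  then obtain t where "w' = enc t" using g by (auto simp: wgood_def)
  then have "w = enc (0 # t)" using w by (simp add: enc_Cons)
  then show "\<exists>t. t \<noteq> [] \<and> w = enc t" by blast
qed

lemma good_rmul: "good M \<Longrightarrow> good (rmul M)"
proof -
  assume g: "good M"
  then have g2: "good (lmul LPi M)" by (rule good_lmul_pi)
  show ?thesis unfolding good_def
  proof (intro allI impI)
    fix w assume "rmul M w \<noteq> 0"
    then have "lmul LPi M w \<noteq> 0 \<or> M w \<noteq> 0" by (auto simp: rmul_def ncsub_def)
    then show "\<exists>t. t \<noteq> [] \<and> w = enc t" using g g2 by (auto simp: good_def)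
  qed
qed

lemma good_funpow_rmul: "good M \<Longrightarrow> good ((rmul ^^ k) M)"
  by (induction k) (simp_all add: good_rmul)

lemma wgood_funpow_y: "wgood M \<Longrightarrow> wgood ((lmul LY ^^ k) M)"
  by (induction k) (simp_all add: good_lmul_y good_wgood)

lemma good_funpow_y: "wgood M \<Longrightarrow> b \<ge> 1 \<Longrightarrow> good ((lmul LY ^^ b) M)"
proof -
  assume w: "wgood M" and b: "b \<ge> 1"
  then obtain b' where "b = Suc b'" by (cases b) auto
  then show ?thesis using wgood_funpow_y[OF w, of b'] by (simp add: good_lmul_y)
qed

lemma wgood_prest: "\<forall>j\<in>set js. B j \<ge> 1 \<Longrightarrow> wgood (prest A B js)"
  by (induction js) (simp_all add: prest_Nil prest_Cons wgood_one good_wgood good_funpow_rmul good_funpow_y)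

lemma Wword_eq: "Wword (Suc a # t) = rmul (delta (enc (a # t)))"
proof -
  have D: "ncprod (concat (map (\<lambda>k. [ncpow ncpi k, ncy]) t)) = delta (enc t)"
    by (induction t) (simp_all add: ncprod_def ncone_delta ncpow_pi ncy_delta ncmult_letter
          lmul_delta funpow_lmul_delta enc_Cons)
  have "Wword (Suc a # t) = (lmul LPi ^^ a) (rmul (lmul LY (delta (enc t))))"
    unfolding Wword_def using D
    by (simp add: ncprod_def ncpow_pi ncmult_rho' ncy_delta ncmult_letter)
  also have "\<dots> = rmul (delta (enc (a # t)))"
    by (simp add: funpow_lmul_rmul lmul_delta funpow_lmul_delta enc_Cons)
  finally show ?thesis .
qed

lemma rmul_sum: "rmul (\<lambda>w. \<Sum>x\<in>F. k x * g x w) w = (\<Sum>x\<in>F. k x * rmul (g x) w)"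
  by (cases w) (auto simp: rmul_def ncsub_def lmul_def sum_subtractf sum_negf algebra_simps)

lemma repr_good:
  assumes fin: "ncpoly_fin Z" and g: "good Z"
  shows "\<exists>c :: nat list \<Rightarrow> rat. finite {s. c s \<noteq> 0} \<and> (\<forall>s. c s \<noteq> 0 \<longrightarrow> admissible s) \<and>
      rmul Z = (\<lambda>w. \<Sum>s\<in>{s. c s \<noteq> 0}. c s * Wword s w)"
proof -
  define T where "T = {t. t \<noteq> [] \<and> Z (enc t) \<noteq> 0}"
  define c where "c s = (if s \<noteq> [] \<and> hd s \<ge> 1 then Z (enc ((hd s - 1) # tl s)) else 0)" for s
  define \<sigma> where "\<sigma> t = Suc (hd t) # tl t" for t :: "nat list"
  have injenc: "inj enc" by (auto intro: injI enc_inj)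
  have suppZ: "{w. Z w \<noteq> 0} = enc ` T"
    using g unfolding good_def T_def by auto
  have finT: "finite T"
    using fin unfolding ncpoly_fin_def suppZ
    by (rule finite_imageD) (meson injenc inj_on_subset subset_UNIV)
  have injs: "inj_on \<sigma> T"
  proof (rule inj_onI)
    fix x y assume "x \<in> T" "y \<in> T" "\<sigma> x = \<sigma> y"
    then show "x = y" unfolding \<sigma>_def T_def by (cases x; cases y) auto
  qed
  have cs: "{s. c s \<noteq> 0} = \<sigma> ` T"
  proof
    show "{s. c s \<noteq> 0} \<subseteq> \<sigma> ` T"
    proof
      fix s assume "s \<in> {s. c s \<noteq> 0}"
      then have s: "s \<noteq> []" "hd s \<ge> 1" "Z (enc ((hd s - 1) # tl s)) \<noteq> 0"
        by (auto simp: c_def split: if_splits)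
      then have "(hd s - 1) # tl s \<in> T" by (simp add: T_def)
      moreover have "s = \<sigma> ((hd s - 1) # tl s)" using s by (simp add: \<sigma>_def)
      ultimately show "s \<in> \<sigma> ` T" by blast
    qed
  next
    show "\<sigma> ` T \<subseteq> {s. c s \<noteq> 0}"
      by (auto simp: \<sigma>_def T_def c_def)
  qed
  have "rmul Z = (\<lambda>w. \<Sum>s\<in>{s. c s \<noteq> 0}. c s * Wword s w)"
  proof (rule ext)
    fix w
    have Zsum: "Z = (\<lambda>w. \<Sum>x\<in>enc ` T. Z x * delta x w)"
    proof (rule ext)
      fix v
      have fe: "finite (enc ` T)" using finT by simp
      have "(\<Sum>x\<in>enc ` T. Z x * delta x v) = (\<Sum>x\<in>enc ` T. if v = x then Z v else 0)"
        by (rule sum.cong) (auto simp: delta_def)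
      also have "\<dots> = (if v \<in> enc ` T then Z v else 0)"
        using sum.delta'[OF fe, of v "\<lambda>_. Z v"] by simp
      finally have "(\<Sum>x\<in>enc ` T. Z x * delta x v) = (if v \<in> enc ` T then Z v else 0)" .
      then show "Z v = (\<Sum>x\<in>enc ` T. Z x * delta x v)"
        using suppZ by auto
    qed
    have "rmul Z w = (\<Sum>x\<in>enc ` T. Z x * rmul (delta x) w)"
      by (subst Zsum) (rule rmul_sum)
    also have "\<dots> = (\<Sum>t\<in>T. Z (enc t) * rmul (delta (enc t)) w)"
      by (subst sum.reindex) (auto intro: inj_on_subset[OF injenc])
    also have "\<dots> = (\<Sum>t\<in>T. c (\<sigma> t) * Wword (\<sigma> t) w)"
    proof (rule sum.cong)
      fix t assume "t \<in> T"
      then have "t \<noteq> []" by (simp add: T_def)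
      then obtain k t' where t: "t = k # t'" by (cases t) auto
      show "Z (enc t) * rmul (delta (enc t)) w = c (\<sigma> t) * Wword (\<sigma> t) w"
        by (simp add: t \<sigma>_def c_def Wword_eq)
    qed simp
    also have "\<dots> = (\<Sum>s\<in>{s. c s \<noteq> 0}. c s * Wword s w)"
      unfolding cs by (subst sum.reindex[OF injs]) simp
    finally show "rmul Z w = (\<Sum>s\<in>{s. c s \<noteq> 0}. c s * Wword s w)" .
  qed
  moreover have "finite {s. c s \<noteq> 0}" unfolding cs using finT by simp
  moreover have "\<forall>s. c s \<noteq> 0 \<longrightarrow> admissible s"
    by (auto simp: c_def admissible_def split: if_splits)
  ultimately show ?thesis by blast
qed

lemma repr_bigP:
  assumes "a \<ge> 1" "b \<ge> 1" "\<forall>j\<in>set js. B j \<ge> 1"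
  shows "\<exists>c :: nat list \<Rightarrow> rat. finite {s. c s \<noteq> 0} \<and> (\<forall>s. c s \<noteq> 0 \<longrightarrow> admissible s) \<and>
      bigP a b A B js = (\<lambda>w. \<Sum>s\<in>{s. c s \<noteq> 0}. c s * Wword s w)"
proof -
  let ?Z = "(rmul ^^ (a - 1)) ((lmul LY ^^ b) (prest A B js))"
  have "bigP a b A B js = rmul ?Z"
    unfolding bigP_eq by (rule funpow_swap1[symmetric])
  moreover have "ncpoly_fin ?Z"
    by (simp add: fin_funpow_rmul fin_funpow_lmul fin_prest)
  moreover have "good ?Z"
    using assms by (simp add: good_funpow_rmul good_funpow_y wgood_prest)
  ultimately show ?thesis using repr_good[of ?Z] by simp
qed


definition Box :: "nat \<Rightarrow> nat \<Rightarrow> nat list set" where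
  "Box N d = {us. length us = d \<and> set us \<subseteq> {1..N}}"

lemma Box_Suc: "Box N (Suc d) = (\<lambda>(u, us). u # us) ` ({1..N} \<times> Box N d)"
proof
  show "Box N (Suc d) \<subseteq> (\<lambda>(u, us). u # us) ` ({1..N} \<times> Box N d)"
  proof
    fix v assume "v \<in> Box N (Suc d)"
    then obtain u us where "v = u # us" "u \<in> {1..N}" "us \<in> Box N d"
      unfolding Box_def by (cases v) auto
    then show "v \<in> (\<lambda>(u, us). u # us) ` ({1..N} \<times> Box N d)" by force
  qed
qed (auto simp: Box_def)

lemma finite_Box: "finite (Box N d)"
proof (induction d)
  case 0
  have "Box N 0 = {[]}" by (auto simp: Box_def)
  then show ?case by simp
next
  case (Suc d) then show ?case by (simp add: Box_Suc)
qed

lemma sum_Box_Suc: "(\<Sum>v\<in>Box N (Suc d). F v) = (\<Sum>u=1..N. \<Sum>us\<in>Box N d. F (u # us))"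
proof -
  have inj: "inj_on (\<lambda>(u, us). u # us) ({1..N} \<times> Box N d)" by (auto intro: inj_onI)
  have "(\<Sum>v\<in>Box N (Suc d). F v) = (\<Sum>(u, us)\<in>{1..N} \<times> Box N d. F (u # us))"
    unfolding Box_Suc by (subst sum.reindex[OF inj]) (simp add: case_prod_unfold)
  also have "\<dots> = (\<Sum>u=1..N. \<Sum>us\<in>Box N d. F (u # us))"
    by (rule sum.cartesian_product[symmetric])
  finally show ?thesis .
qed

definition fN :: "nat \<Rightarrow> complex \<Rightarrow> nat \<Rightarrow> complex" where
  "fN N q K = 1 + gN N q K"

fun WN :: "nat \<Rightarrow> complex \<Rightarrow> nat list \<Rightarrow> nat list \<Rightarrow> complex" where
  "WN N q (a # t) (u # us) = fN N q (u + sum_list us) ^ a * WN N q t us"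
| "WN N q _ _ = 1"

lemma Vc_append: "Vc N q (u @ v) h = Vc N q u (Vc N q v h)"
proof (induction u)
  case (Cons x u) then show ?case by (cases x) auto
qed simp

lemma Vc_rep_pi: "Vc N q (replicate k LPi) h = (piop N q ^^ k) h"
  by (induction k) auto

lemma aop0_exp: "aop N q 0 (\<lambda>S. \<Sum>x\<in>F. q ^ (S * K x) * c x) = (\<lambda>S. \<Sum>x\<in>F. q ^ (S * K x) * (gN N q (K x) * c x))"
proof (rule ext)
  fix S
  have "aop N q 0 (\<lambda>S. \<Sum>x\<in>F. q ^ (S * K x) * c x) S = (\<Sum>m=1..N. \<Sum>x\<in>F. q ^ (S * K x) * (q ^ (K x * m) * c x))"
    unfolding aop_def
    apply (simp add: sum_distrib_left)
    apply (rule sum.cong[OF refl])+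
    apply (simp add: add_mult_distrib2 power_add mult.commute mult.left_commute)
    done
  also have "\<dots> = (\<Sum>x\<in>F. q ^ (S * K x) * (gN N q (K x) * c x))"
    by (subst sum.swap) (simp add: gN_def sum_distrib_left sum_distrib_right mult.commute mult.left_commute)
  finally show "aop N q 0 (\<lambda>S. \<Sum>x\<in>F. q ^ (S * K x) * c x) S = (\<Sum>x\<in>F. q ^ (S * K x) * (gN N q (K x) * c x))" .
qed

lemma piop_exp: "piop N q (\<lambda>S. \<Sum>x\<in>F. q ^ (S * K x) * c x) = (\<lambda>S. \<Sum>x\<in>F. q ^ (S * K x) * (fN N q (K x) * c x))"
  unfolding piop_def aop0_exp by (rule ext) (simp add: fN_def sum.distrib algebra_simps)

lemma piop_exp_pow: "(piop N q ^^ k) (\<lambda>S. \<Sum>x\<in>F. q ^ (S * K x) * c x) = (\<lambda>S. \<Sum>x\<in>F. q ^ (S * K x) * (fN N q (K x) ^ k * c x))"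
  by (induction k) (simp_all add: piop_exp mult.assoc)

lemma yop_box: "yop N q (\<lambda>S. \<Sum>us\<in>Box N d. q ^ (S * sum_list us) * c us)
   = (\<lambda>S. \<Sum>v\<in>Box N (Suc d). q ^ (S * sum_list v) * c (tl v))"
  apply (rule ext)
  apply (simp add: yop_def sum_Box_Suc sum_distrib_left sum_distrib_right power_add add_mult_distrib2)
  apply (subst sum.swap)
  apply (simp add: mult.commute mult.left_commute)
  done

lemma Vc_enc: "Vc N q (enc t) (\<lambda>_. 1) = (\<lambda>S. \<Sum>us\<in>Box N (length t). q ^ (S * sum_list us) * WN N q t us)"
proof (induction t)
  case Nil
  have "Box N 0 = {[]}" by (auto simp: Box_def)
  then show ?case by (simp add: enc_def)
next
  case (Cons k t)
  have "Vc N q (enc (k # t)) (\<lambda>_. 1) = (piop N q ^^ k) (yop N q (Vc N q (enc t) (\<lambda>_. 1)))"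
    by (simp add: enc_Cons Vc_append Vc_rep_pi)
  also have "\<dots> = (\<lambda>S. \<Sum>v\<in>Box N (Suc (length t)). q ^ (S * sum_list v) * (fN N q (sum_list v) ^ k * WN N q t (tl v)))"
    by (simp only: Cons yop_box piop_exp_pow)
  also have "\<dots> = (\<lambda>S. \<Sum>v\<in>Box N (length (k # t)). q ^ (S * sum_list v) * WN N q (k # t) v)"
  proof (rule ext, rule sum.cong)
    fix S v assume "v \<in> Box N (length (k # t))"
    then obtain u us where "v = u # us" by (cases v) (auto simp: Box_def)
    then show "q ^ (S * sum_list v) * (fN N q (sum_list v) ^ k * WN N q t (tl v)) = q ^ (S * sum_list v) * WN N q (k # t) v"
      by simp
  qed simp
  finally show ?case .
qed

lemma Lc_Wword: "Lc N q (Wword (Suc a # t)) (\<lambda>_. 1) 0 =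
   (\<Sum>v\<in>Box N (Suc (length t)). gN N q (sum_list v) * (fN N q (sum_list v) ^ a * WN N q t (tl v)))"
proof -
  have e: "Lc N q (delta w) h = Vc N q w h" for w h by (rule ext) (simp add: Lc_delta)
  have "Lc N q (Wword (Suc a # t)) (\<lambda>_. 1) = aop N q 0 (Vc N q (enc (a # t)) (\<lambda>_. 1))"
    by (simp add: Wword_eq Lc_rmul fin_delta e)
  also have "\<dots> = aop N q 0 ((piop N q ^^ a) (yop N q (Vc N q (enc t) (\<lambda>_. 1))))"
    by (simp add: enc_Cons Vc_append Vc_rep_pi)
  also have "\<dots> = (\<lambda>S. \<Sum>v\<in>Box N (Suc (length t)). q ^ (S * sum_list v) * (gN N q (sum_list v) * (fN N q (sum_list v) ^ a * WN N q t (tl v))))"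
    by (simp only: Vc_enc yop_box piop_exp_pow aop0_exp)
  finally show ?thesis by simp
qed


fun sufs :: "nat list \<Rightarrow> nat list" where
  "sufs [] = []"
| "sufs (u # us) = (u + sum_list us) # sufs us"

definition Uset :: "nat \<Rightarrow> nat list set" where
  "Uset d = {us. length us = d \<and> (\<forall>x\<in>set us. x > 0)}"

definition KSet :: "nat \<Rightarrow> nat list set" where
  "KSet d = {ks. length ks = d \<and> sorted_wrt (>) ks \<and> (\<forall>k\<in>set ks. k > 0)}"

lemma length_sufs[simp]: "length (sufs us) = length us"
  by (induction us) auto

lemma sufs_le: "x \<in> set (sufs us) \<Longrightarrow> x \<le> sum_list us"
  by (induction us) auto

lemma sufs_hd: "us \<noteq> [] \<Longrightarrow> hd (sufs us) = sum_list us"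
  by (cases us) auto

lemma sufs_in: "us \<in> Uset d \<Longrightarrow> sufs us \<in> KSet d"
proof (induction us arbitrary: d)
  case Nil then show ?case by (simp add: Uset_def KSet_def)
next
  case (Cons u us)
  then have "us \<in> Uset (d - 1)" "u > 0" "d = Suc (length us)" by (auto simp: Uset_def)
  then have "sufs us \<in> KSet (d - 1)" using Cons.IH by blast
  then show ?case using \<open>u > 0\<close> \<open>d = Suc (length us)\<close>
    by (auto simp: KSet_def dest: sufs_le)
qed

lemma sufs_inj: "sufs us = sufs vs \<Longrightarrow> us = vs"
proof (induction us arbitrary: vs)
  case Nil then show ?case by (cases vs) auto
next
  case (Cons u us) then show ?case by (cases vs) auto
qed

lemma sufs_surj: "ks \<in> KSet d \<Longrightarrow> \<exists>us\<in>Uset d. sufs us = ks"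
proof (induction ks arbitrary: d)
  case Nil then show ?case by (auto simp: KSet_def Uset_def)
next
  case (Cons k ks)
  then have ks: "ks \<in> KSet (d - 1)" and d: "d = Suc (length ks)" and kpos: "k > 0"
    and gt: "\<forall>x\<in>set ks. k > x"
    by (auto simp: KSet_def)
  obtain vs where vs: "vs \<in> Uset (d - 1)" "sufs vs = ks" using Cons.IH[OF ks] by blast
  show ?case
  proof (cases ks)
    case Nil
    then have "vs = []" using vs by (cases vs) auto
    then show ?thesis using Nil d kpos by (intro bexI[of _ "[k]"]) (auto simp: Uset_def)
  next
    case (Cons k' ks')
    then have "vs \<noteq> []" using vs by auto
    then have "sum_list vs = k'" using vs Cons sufs_hd by fastforce
    moreover have "k > k'" using gt Cons by auto
    ultimately show ?thesis using vs d
      by (intro bexI[of _ "(k - k') # vs"]) (auto simp: Uset_def)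
  qed
qed

lemma sufs_bij: "bij_betw sufs (Uset d) (KSet d)"
  unfolding bij_betw_def
  by (auto intro: inj_onI sufs_inj sufs_in dest: sufs_surj)

fun PE :: "complex \<Rightarrow> nat list \<Rightarrow> nat list \<Rightarrow> complex" where
  "PE q (a # t) (u # us) = (1 - q ^ (u + sum_list us)) ^ a * PE q t us"
| "PE q _ _ = 1"

lemma prod_PE: "length v = length s \<Longrightarrow> (\<Prod>j<length s. (1 - q ^ (sufs v ! j)) ^ (s ! j)) = PE q s v"
proof (induction s arbitrary: v)
  case Nil then show ?case by simp
next
  case (Cons a t)
  then obtain u us where v: "v = u # us" "length us = length t" by (cases v) auto
  have "(\<Prod>j<length (a # t). (1 - q ^ (sufs v ! j)) ^ ((a # t) ! j))
     = (1 - q ^ (sufs v ! 0)) ^ ((a # t) ! 0) * (\<Prod>j<length t. (1 - q ^ (sufs v ! Suc j)) ^ ((a # t) ! Suc j))"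
    by (simp only: length_Cons prod.lessThan_Suc_shift)
  then show ?case using Cons.IH[OF v(2)] v by simp
qed


lemma geo_z: "(\<Sum>m=1..N. (z::complex) ^ m) * (1 - z) = z * (1 - z ^ N)"
proof (induction N)
  case 0 then show ?case by simp
next
  case (Suc N)
  have "(\<Sum>m=1..Suc N. z ^ m) = (\<Sum>m=1..N. z ^ m) + z ^ Suc N" by simp
  then have "(\<Sum>m=1..Suc N. z ^ m) * (1 - z) = z * (1 - z ^ N) + z ^ Suc N * (1 - z)"
    using Suc by (simp add: distrib_right)
  also have "\<dots> = z * (1 - z ^ Suc N)" by (simp add: algebra_simps)
  finally show ?case .
qed

lemma gN_geo: "gN N q K * (1 - q ^ K) = q ^ K * (1 - q ^ (K * N))"
  using geo_z[where z="q ^ K" and N=N] by (simp add: gN_def power_mult)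

lemma fN_geo: "fN N q K * (1 - q ^ K) = 1 - q ^ (K * (N + 1))"
  using gN_geo[of N q K] by (simp add: fN_def algebra_simps power_add power_mult)

fun CN :: "nat \<Rightarrow> complex \<Rightarrow> nat list \<Rightarrow> nat list \<Rightarrow> complex" where
  "CN N q (a # t) (u # us) = (1 - q ^ ((u + sum_list us) * (N + 1))) ^ a * CN N q t us"
| "CN N q _ _ = 1"

lemma WN_PE: "WN N q t us * PE q t us = CN N q t us"
proof (induction t arbitrary: us)
  case Nil then show ?case by simp
next
  case (Cons a t)
  show ?case
  proof (cases us)
    case Nil then show ?thesis by simp
  next
    case (Cons u us')
    have "WN N q (a # t) us * PE q (a # t) us
       = (fN N q (u + sum_list us') * (1 - q ^ (u + sum_list us'))) ^ a * (WN N q t us' * PE q t us')"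
      by (simp add: Cons power_mult_distrib mult.commute mult.left_commute)
    then show ?thesis using Cons.IH[of us'] by (simp add: Cons fN_geo)
  qed
qed

lemma mb:
  fixes x y :: complex and \<delta> :: real
  assumes "norm (x - 1) \<le> (1 + \<delta>) ^ m - 1" "norm (y - 1) \<le> (1 + \<delta>) ^ n - 1" "\<delta> \<ge> 0"
  shows "norm (x * y - 1) \<le> (1 + \<delta>) ^ (m + n) - 1"
proof -
  let ?A = "(1 + \<delta>) ^ m - 1" and ?B = "(1 + \<delta>) ^ n - 1"
  have A0: "?A \<ge> 0" "?B \<ge> 0" using assms(3) by (simp_all add: one_le_power)
  have "x * y - 1 = (x - 1) * (y - 1) + (x - 1) + (y - 1)" by (simp add: algebra_simps)
  then have "norm (x * y - 1) \<le> norm ((x - 1) * (y - 1) + (x - 1)) + norm (y - 1)"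
    by (metis norm_triangle_ineq)
  also have "\<dots> \<le> norm ((x - 1) * (y - 1)) + norm (x - 1) + norm (y - 1)"
    using norm_triangle_ineq[of "(x - 1) * (y - 1)" "x - 1"] by simp
  also have "\<dots> = norm (x - 1) * norm (y - 1) + norm (x - 1) + norm (y - 1)"
    by (simp add: norm_mult)
  also have "\<dots> \<le> ?A * ?B + ?A + ?B"
    using assms A0 by (intro add_mono mult_mono) auto
  also have "\<dots> = (1 + \<delta>) ^ (m + n) - 1" by (simp add: power_add algebra_simps)
  finally show ?thesis .
qed

lemma pb:
  fixes e :: complex and \<delta> :: real
  assumes "norm e \<le> \<delta>"
  shows "norm ((1 - e) ^ a - 1) \<le> (1 + \<delta>) ^ a - 1"
proof (induction a)
  case 0 then show ?case by simp
next
  case (Suc a)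
  have d: "\<delta> \<ge> 0" using assms norm_ge_zero order_trans by blast
  have "norm ((1 - e) - 1) \<le> (1 + \<delta>) ^ 1 - 1" using assms by simp
  from mb[OF this Suc d] show ?case by simp
qed

lemma norm_qpow_le:
  fixes q :: complex
  assumes "norm q < 1" "k \<ge> N"
  shows "norm (q ^ k) \<le> norm q ^ N"
  unfolding norm_power using assms by (intro power_decreasing) auto

lemma CN_bound:
  assumes "norm q < 1" "\<forall>x\<in>set us. x > 0"
  shows "norm (CN N q t us - 1) \<le> (1 + norm q ^ N) ^ sum_list t - 1"
  using assms(2)
proof (induction t arbitrary: us)
  case Nil then show ?case by simp
next
  case (Cons a t)
  show ?case
  proof (cases us)
    case Nil then show ?thesis by (simp add: one_le_power)
  next
    case (Cons u us')
    then have u: "u > 0" and us': "\<forall>x\<in>set us'. x > 0" using Cons.prems by auto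
    have "norm (q ^ ((u + sum_list us') * (N + 1))) \<le> norm q ^ N"
    proof (rule norm_qpow_le[OF assms(1)])
      have "1 * (N + 1) \<le> (u + sum_list us') * (N + 1)" using u by (intro mult_le_mono1) simp
      then show "N \<le> (u + sum_list us') * (N + 1)" by simp
    qed
    then have "norm ((1 - q ^ ((u + sum_list us') * (N + 1))) ^ a - 1) \<le> (1 + norm q ^ N) ^ a - 1"
      by (rule pb)
    from mb[OF this Cons.IH[OF us']] show ?thesis by (simp add: Cons)
  qed
qed

lemma norm_one_minus:
  fixes q :: complex
  assumes "norm q < 1" "k > 0"
  shows "norm (1 - q ^ k) \<ge> 1 - norm q"
proof -
  have "norm (q ^ k) \<le> norm q ^ 1" using assms by (intro norm_qpow_le) auto
  moreover have "1 - norm (q ^ k) \<le> norm (1 - q ^ k)"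
    using norm_triangle_ineq2[of 1 "q ^ k"] by simp
  ultimately show ?thesis by simp
qed

lemma PE_bound:
  assumes "norm q < 1" "\<forall>x\<in>set us. x > 0"
  shows "norm (PE q t us) \<ge> (1 - norm q) ^ sum_list t"
  using assms(2)
proof (induction t arbitrary: us)
  case Nil then show ?case by simp
next
  case (Cons a t)
  have r1: "1 - norm q \<le> 1" "0 \<le> 1 - norm q" using assms(1) by auto
  show ?case
  proof (cases us)
    case Nil then show ?thesis using r1 by (simp add: power_le_one)
  next
    case (Cons u us')
    then have u: "u > 0" and us': "\<forall>x\<in>set us'. x > 0" using Cons.prems by auto
    have "(1 - norm q) ^ a \<le> norm (1 - q ^ (u + sum_list us')) ^ a"
      using norm_one_minus[OF assms(1), of "u + sum_list us'"] u r1 by (intro power_mono) auto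
    then have "(1 - norm q) ^ a * (1 - norm q) ^ sum_list t \<le> norm (1 - q ^ (u + sum_list us')) ^ a * norm (PE q t us')"
      using Cons.IH[OF us'] r1 by (intro mult_mono) auto
    then show ?thesis by (simp add: Cons power_add norm_mult norm_power)
  qed
qed

lemma PE_nz:
  assumes "norm q < 1" "\<forall>x\<in>set us. x > 0"
  shows "PE q t us \<noteq> 0"
proof -
  have "(1 - norm q) ^ sum_list t > 0" using assms(1) by simp
  then show ?thesis using PE_bound[OF assms, of t] by auto
qed


lemma box_pow: "(\<Sum>v\<in>Box M d. (r::real) ^ sum_list v) = (\<Sum>u=1..M. r ^ u) ^ d"
proof (induction d)
  case 0
  have "Box M 0 = {[]}" by (auto simp: Box_def)
  then show ?case by simp
next
  case (Suc d)
  have "(\<Sum>v\<in>Box M (Suc d). r ^ sum_list v) = (\<Sum>u=1..M. \<Sum>us\<in>Box M d. r ^ u * r ^ sum_list us)"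
    by (simp add: sum_Box_Suc power_add)
  also have "\<dots> = (\<Sum>u=1..M. r ^ u) * (\<Sum>us\<in>Box M d. r ^ sum_list us)"
    by (simp add: sum_product)
  finally show ?case using Suc by simp
qed

lemma geo_bound:
  fixes r :: real
  assumes "0 \<le> r" "r < 1"
  shows "(\<Sum>u=1..M. r ^ u) \<le> 1 / (1 - r)"
proof -
  have "(\<Sum>u=1..M. r ^ u) \<le> (\<Sum>u<Suc M. r ^ u)"
    by (rule sum_mono2) (use assms in auto)
  also have "\<dots> = (1 - r ^ Suc M) / (1 - r)"
    by (subst sum_gp_strict) (use assms in auto)
  also have "\<dots> \<le> 1 / (1 - r)"
    using assms by (intro divide_right_mono) auto
  finally show ?thesis .
qed

lemma box_bound:
  fixes r :: real
  assumes "0 \<le> r" "r < 1"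
  shows "(\<Sum>v\<in>Box M d. r ^ sum_list v) \<le> (1 / (1 - r)) ^ d"
  unfolding box_pow using assms geo_bound[OF assms]
  by (intro power_mono) (auto intro: sum_nonneg)

lemma Box_Uset: "Box N d \<subseteq> Uset d"
  by (auto simp: Box_def Uset_def)

lemma Uset_Box:
  assumes "finite F" "F \<subseteq> Uset d" "(\<Sum>v\<in>F. sum_list v) \<le> M"
  shows "F \<subseteq> Box M d"
proof
  fix v assume v: "v \<in> F"
  have "sum_list v \<le> (\<Sum>v\<in>F. sum_list v)" by (rule member_le_sum) (use v assms in auto)
  moreover have "x \<le> sum_list v" if "x \<in> set v" for x
    using that by (rule member_le_sum_list) simp
  ultimately have "\<forall>x\<in>set v. x \<le> M" using assms(3) by (meson le_trans)
  then show "v \<in> Box M d" using v assms(2) by (auto simp: Box_def Uset_def Suc_le_eq)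
qed

lemma div_aux: "(T::complex) * P = X * c \<Longrightarrow> P \<noteq> 0 \<Longrightarrow> T = X / P * c"
  by (simp add: field_simps)

lemma ring_aux: "(g::complex) * (f ^ a * W) * ((1 - z) ^ Suc a * P) = (g * (1 - z)) * ((f * (1 - z)) ^ a * (W * P))"
  by (simp add: power_mult_distrib ac_simps)

lemma Wword_limit:
  fixes q :: complex
  assumes q: "norm q < 1"
  shows "(\<lambda>N. Lc N q (Wword (Suc a # t)) (\<lambda>_. 1) 0) \<longlonglongrightarrow> zIII_series q (Suc a # t)"
proof -
  define s where "s = Suc a # t"
  define D where "D = Suc (length t)"
  define r where "r = norm q"
  define S where "S = sum_list s"
  define G where "G = 1 / (1 - r)"
  define B where "B = G ^ S * G ^ D"
  define ex where "ex v = q ^ sum_list v / PE q s v" for v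
  have r0: "0 \<le> r" "r < 1" using q by (auto simp: r_def)
  have G0: "G \<ge> 0" using r0 by (simp add: G_def)
  have posU: "\<forall>x\<in>set v. x > 0" if "v \<in> Uset d" for v d using that by (simp add: Uset_def)
  have z: "zIII_series q s = infsum ex (Uset D)"
  proof -
    have "zIII_series q s = infsum (\<lambda>ks. q ^ hd ks / (\<Prod>j<length s. (1 - q ^ (ks ! j)) ^ (s ! j))) (KSet D)"
      by (simp add: zIII_series_def KSet_def s_def D_def)
    also have "\<dots> = infsum (\<lambda>v. q ^ hd (sufs v) / (\<Prod>j<length s. (1 - q ^ (sufs v ! j)) ^ (s ! j))) (Uset D)"
      by (rule infsum_reindex_bij_betw[OF sufs_bij, symmetric])
    also have "\<dots> = infsum ex (Uset D)"
    proof (rule infsum_cong)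
      fix v assume v: "v \<in> Uset D"
      then have "length v = length s" "v \<noteq> []" by (auto simp: Uset_def D_def s_def)
      then show "q ^ hd (sufs v) / (\<Prod>j<length s. (1 - q ^ (sufs v ! j)) ^ (s ! j)) = ex v"
        by (simp add: ex_def sufs_hd prod_PE)
    qed
    finally show ?thesis .
  qed
  have exb: "norm (ex v) \<le> r ^ sum_list v * G ^ S" if v: "v \<in> Uset D" for v
  proof -
    have pb: "norm (PE q s v) \<ge> (1 - r) ^ S"
      using PE_bound[OF q posU[OF v]] by (simp add: r_def S_def)
    have p0: "(1 - r) ^ S > 0" using r0 by simp
    then have p1: "norm (PE q s v) > 0" using pb by linarith
    have "norm (ex v) \<le> r ^ sum_list v / (1 - r) ^ S"
      unfolding ex_def norm_divide norm_power r_def[symmetric] using pb p0 p1 r0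
      by (intro divide_left_mono) auto
    then show ?thesis by (simp add: G_def power_one_over divide_inverse power_inverse)
  qed
  have boxb: "(\<Sum>v\<in>Box M D. norm (ex v)) \<le> B" for M
  proof -
    have "(\<Sum>v\<in>Box M D. norm (ex v)) \<le> (\<Sum>v\<in>Box M D. r ^ sum_list v * G ^ S)"
      by (rule sum_mono) (use exb Box_Uset in blast)
    also have "\<dots> = G ^ S * (\<Sum>v\<in>Box M D. r ^ sum_list v)"
      by (simp add: sum_distrib_left mult.commute)
    also have "\<dots> \<le> G ^ S * G ^ D"
      using box_bound[OF r0, of M D] G0 by (intro mult_left_mono) (auto simp: G_def)
    finally show ?thesis by (simp add: B_def)
  qed
  have summ: "ex summable_on Uset D"
  proof (rule abs_summable_summable, rule nonneg_bdd_above_summable_on)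
    show "bdd_above (sum (\<lambda>x. norm (ex x)) ` {F. F \<subseteq> Uset D \<and> finite F})"
    proof (rule bdd_aboveI2)
      fix F assume F: "F \<in> {F. F \<subseteq> Uset D \<and> finite F}"
      let ?M = "\<Sum>v\<in>F. sum_list v"
      have "F \<subseteq> Box ?M D" using F by (intro Uset_Box) auto
      then have "(\<Sum>x\<in>F. norm (ex x)) \<le> (\<Sum>x\<in>Box ?M D. norm (ex x))"
        by (intro sum_mono2) (auto simp: finite_Box)
      then show "(\<Sum>x\<in>F. norm (ex x)) \<le> B" using boxb[of ?M] by linarith
    qed
  qed simp
  have lim1: "(\<lambda>N. \<Sum>v\<in>Box N D. ex v) \<longlonglongrightarrow> infsum ex (Uset D)"
  proof -
    have hs: "(sum ex \<longlongrightarrow> infsum ex (Uset D)) (finite_subsets_at_top (Uset D))"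
      using has_sum_infsum[OF summ] by (simp add: has_sum_def)
    have fl: "filterlim (\<lambda>N. Box N D) (finite_subsets_at_top (Uset D)) sequentially"
      unfolding filterlim_finite_subsets_at_top
    proof (intro allI impI)
      fix X assume X: "finite X \<and> X \<subseteq> Uset D"
      show "\<forall>\<^sub>F N in sequentially. finite (Box N D) \<and> X \<subseteq> Box N D \<and> Box N D \<subseteq> Uset D"
      proof (rule eventually_sequentiallyI[of "\<Sum>v\<in>X. sum_list v"])
        fix N assume N: "(\<Sum>v\<in>X. sum_list v) \<le> N"
        have "X \<subseteq> Box N D" using X N by (intro Uset_Box) auto
        then show "finite (Box N D) \<and> X \<subseteq> Box N D \<and> Box N D \<subseteq> Uset D"
          by (simp add: finite_Box Box_Uset)
      qed
    qed
    show ?thesis using filterlim_compose[OF hs fl] by simp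
  qed
  define \<delta> where "\<delta> N = (1 + r ^ N) ^ S - 1" for N
  have trdiff: "norm (gN N q (sum_list v) * (fN N q (sum_list v) ^ a * WN N q t (tl v)) - ex v)
      \<le> norm (ex v) * \<delta> N" if v: "v \<in> Box N D" for v N
  proof -
    have vU: "v \<in> Uset D" using v Box_Uset by blast
    then obtain u us where vv: "v = u # us" by (cases v) (auto simp: Uset_def D_def)
    have pos: "\<forall>x\<in>set v. x > 0" using posU[OF vU] .
    then have u: "u > 0" and us: "\<forall>x\<in>set us. x > 0" by (auto simp: vv)
    define K where "K = u + sum_list us"
    have Kpos: "K > 0" using u by (simp add: K_def)
    define corr where "corr = (1 - q ^ (K * N)) * ((1 - q ^ (K * (N + 1))) ^ a * CN N q t us)"
    have PEs: "PE q s v = (1 - q ^ K) ^ Suc a * PE q t us" by (simp add: s_def vv K_def)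
    have PEnz: "PE q s v \<noteq> 0" using PE_nz[OF q pos] .
    have sv: "sum_list v = K" "tl v = us" by (simp_all add: vv K_def)
    have "gN N q (sum_list v) * (fN N q (sum_list v) ^ a * WN N q t (tl v)) * PE q s v
       = (gN N q K * (1 - q ^ K)) * ((fN N q K * (1 - q ^ K)) ^ a * (WN N q t us * PE q t us))"
      unfolding PEs sv by (rule ring_aux)
    also have "\<dots> = q ^ K * corr"
      by (simp add: gN_geo fN_geo WN_PE corr_def)
    finally have "gN N q (sum_list v) * (fN N q (sum_list v) ^ a * WN N q t (tl v)) = ex v * corr"
      using PEnz unfolding ex_def sv by (rule div_aux)
    then have eq: "gN N q (sum_list v) * (fN N q (sum_list v) ^ a * WN N q t (tl v)) - ex v = ex v * (corr - 1)"
      by (simp add: algebra_simps)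
    have b1: "norm ((1 - q ^ (K * N)) - 1) \<le> (1 + r ^ N) ^ 1 - 1"
    proof -
      have "norm (q ^ (K * N)) \<le> norm q ^ N"
        using Kpos by (intro norm_qpow_le[OF q]) simp
      then show ?thesis by (simp add: r_def)
    qed
    have "norm (q ^ (K * (N + 1))) \<le> norm q ^ N"
    proof (rule norm_qpow_le[OF q])
      have "Suc 0 * N \<le> K * N" using Kpos by (intro mult_le_mono1) simp
      then have h: "N \<le> K * N" by (simp only: mult_Suc mult_0 add_0_right)
      have "K * (N + 1) = K * N + K" by (simp add: algebra_simps)
      then show "N \<le> K * (N + 1)" using h by linarith
    qed
    then have b2: "norm ((1 - q ^ (K * (N + 1))) ^ a - 1) \<le> (1 + r ^ N) ^ a - 1"
      unfolding r_def by (rule pb)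
    have b3: "norm (CN N q t us - 1) \<le> (1 + r ^ N) ^ sum_list t - 1"
      using CN_bound[OF q us] by (simp add: r_def)
    have d0: "r ^ N \<ge> 0" using r0 by simp
    have "norm (corr - 1) \<le> (1 + r ^ N) ^ (1 + (a + sum_list t)) - 1"
      unfolding corr_def by (intro mb[OF b1 mb[OF b2 b3 d0] d0])
    then have "norm (corr - 1) \<le> \<delta> N" by (simp add: \<delta>_def S_def s_def)
    then show ?thesis unfolding eq norm_mult by (intro mult_left_mono) auto
  qed
  have diffb: "norm ((\<Sum>v\<in>Box N D. gN N q (sum_list v) * (fN N q (sum_list v) ^ a * WN N q t (tl v)))
       - (\<Sum>v\<in>Box N D. ex v)) \<le> B * \<delta> N" for N
  proof -
    have d0: "\<delta> N \<ge> 0" using r0 by (simp add: \<delta>_def one_le_power)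
    have "norm ((\<Sum>v\<in>Box N D. gN N q (sum_list v) * (fN N q (sum_list v) ^ a * WN N q t (tl v)))
       - (\<Sum>v\<in>Box N D. ex v))
      = norm (\<Sum>v\<in>Box N D. gN N q (sum_list v) * (fN N q (sum_list v) ^ a * WN N q t (tl v)) - ex v)"
      by (simp add: sum_subtractf)
    also have "\<dots> \<le> (\<Sum>v\<in>Box N D. norm (gN N q (sum_list v) * (fN N q (sum_list v) ^ a * WN N q t (tl v)) - ex v))"
      by (rule norm_sum)
    also have "\<dots> \<le> (\<Sum>v\<in>Box N D. norm (ex v) * \<delta> N)"
      by (rule sum_mono) (rule trdiff)
    also have "\<dots> = (\<Sum>v\<in>Box N D. norm (ex v)) * \<delta> N"
      by (simp add: sum_distrib_right)
    also have "\<dots> \<le> B * \<delta> N"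
      using boxb d0 by (intro mult_right_mono) auto
    finally show ?thesis .
  qed
  have dl: "\<delta> \<longlonglongrightarrow> 0"
  proof -
    have "norm r < 1" using r0 by simp
    then have rl: "(\<lambda>N. r ^ N) \<longlonglongrightarrow> 0" by (rule LIMSEQ_power_zero)
    then have "(\<lambda>N. (1 + r ^ N) ^ S - 1) \<longlonglongrightarrow> (1 + 0) ^ S - 1"
      by (intro tendsto_diff tendsto_power tendsto_add tendsto_const rl)
    then show ?thesis by (simp add: \<delta>_def[abs_def])
  qed
  have "(\<lambda>N. (\<Sum>v\<in>Box N D. gN N q (sum_list v) * (fN N q (sum_list v) ^ a * WN N q t (tl v)))
       - (\<Sum>v\<in>Box N D. ex v)) \<longlonglongrightarrow> 0"
  proof (rule Lim_null_comparison)
    show "\<forall>\<^sub>F N in sequentially. norm ((\<Sum>v\<in>Box N D. gN N q (sum_list v) * (fN N q (sum_list v) ^ a * WN N q t (tl v)))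
       - (\<Sum>v\<in>Box N D. ex v)) \<le> B * \<delta> N"
      using diffb by simp
    show "(\<lambda>N. B * \<delta> N) \<longlonglongrightarrow> 0" using tendsto_mult_right_zero[OF dl] by simp
  qed
  from tendsto_add[OF this lim1]
  have "(\<lambda>N. \<Sum>v\<in>Box N D. gN N q (sum_list v) * (fN N q (sum_list v) ^ a * WN N q t (tl v))) \<longlonglongrightarrow> infsum ex (Uset D)"
    by simp
  then show ?thesis
    unfolding Lc_Wword z[unfolded s_def] D_def .
qed


lemma fin_Wword: "admissible s \<Longrightarrow> ncpoly_fin (Wword s)"
proof -
  assume "admissible s"
  then obtain x t where "s = x # t" "x \<ge> 1" unfolding admissible_def by (cases s) auto
  then have "s = Suc (x - 1) # t" by simp
  then show ?thesis by (simp only: Wword_eq fin_rmul fin_delta)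
qed

lemma Lc_lin:
  assumes fc: "finite C" and adm: "\<forall>s\<in>C. admissible s"
  shows "Lc N q (\<lambda>w. \<Sum>s\<in>C. c s * Wword s w) h S = (\<Sum>s\<in>C. of_rat (c s) * Lc N q (Wword s) h S)"
proof -
  define A where "A = (\<Union>s\<in>C. {w. Wword s w \<noteq> 0})"
  have fA: "finite A" unfolding A_def using fc adm fin_Wword by (auto simp: ncpoly_fin_def)
  have sub: "{w. (\<Sum>s\<in>C. c s * Wword s w) \<noteq> 0} \<subseteq> A"
  proof
    fix w assume "w \<in> {w. (\<Sum>s\<in>C. c s * Wword s w) \<noteq> 0}"
    then obtain s where "s \<in> C" "c s * Wword s w \<noteq> 0"
      by (metis (mono_tags, lifting) mem_Collect_eq sum.neutral)
    then show "w \<in> A" unfolding A_def by auto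
  qed
  have "Lc N q (\<lambda>w. \<Sum>s\<in>C. c s * Wword s w) h S
      = (\<Sum>w\<in>A. of_rat (\<Sum>s\<in>C. c s * Wword s w) * Vc N q w h S)"
    by (rule Lc_superset[OF fA sub])
  also have "\<dots> = (\<Sum>w\<in>A. \<Sum>s\<in>C. of_rat (c s) * (of_rat (Wword s w) * Vc N q w h S))"
    by (simp add: of_rat_sum of_rat_mult sum_distrib_right mult.assoc)
  also have "\<dots> = (\<Sum>s\<in>C. of_rat (c s) * (\<Sum>w\<in>A. of_rat (Wword s w) * Vc N q w h S))"
    by (subst sum.swap) (simp add: sum_distrib_left)
  also have "\<dots> = (\<Sum>s\<in>C. of_rat (c s) * Lc N q (Wword s) h S)"
  proof (rule sum.cong[OF refl])
    fix s assume "s \<in> C"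
    then have "{w. Wword s w \<noteq> 0} \<subseteq> A" unfolding A_def by auto
    then show "of_rat (c s) * (\<Sum>w\<in>A. of_rat (Wword s w) * Vc N q w h S) = of_rat (c s) * Lc N q (Wword s) h S"
      using Lc_superset[OF fA] by simp
  qed
  finally show ?thesis .
qed

lemma Lc_repr_lim:
  fixes q :: complex
  assumes q: "norm q < 1" and fc: "finite {s. c s \<noteq> 0}" and adm: "\<forall>s. c s \<noteq> 0 \<longrightarrow> admissible s"
    and P: "P = (\<lambda>w. \<Sum>s\<in>{s. c s \<noteq> 0}. c s * Wword s w)"
  shows "(\<lambda>N. Lc N q P (\<lambda>_. 1) 0) \<longlonglongrightarrow> (\<Sum>s\<in>{s. c s \<noteq> 0}. of_rat (c s) * zIII_series q s)"
proof -
  have "(\<lambda>N. \<Sum>s\<in>{s. c s \<noteq> 0}. of_rat (c s) * Lc N q (Wword s) (\<lambda>_. 1) 0)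
     \<longlonglongrightarrow> (\<Sum>s\<in>{s. c s \<noteq> 0}. of_rat (c s) * zIII_series q s)"
  proof (intro tendsto_sum tendsto_mult_left)
    fix s assume "s \<in> {s. c s \<noteq> 0}"
    then have "admissible s" using adm by auto
    then obtain x t where "s = x # t" "x \<ge> 1" unfolding admissible_def by (cases s) auto
    then have "s = Suc (x - 1) # t" by simp
    then show "(\<lambda>N. Lc N q (Wword s) (\<lambda>_. 1) 0) \<longlonglongrightarrow> zIII_series q s"
      using Wword_limit[OF q] by simp
  qed
  then show ?thesis unfolding P using Lc_lin[OF fc] adm by simp
qed

lemma zIII_lim:
  fixes q :: complex
  assumes q: "norm q < 1"
    and ex: "\<exists>c :: nat list \<Rightarrow> rat. finite {s. c s \<noteq> 0} \<and> (\<forall>s. c s \<noteq> 0 \<longrightarrow> admissible s) \<and>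
      P = (\<lambda>w. \<Sum>s\<in>{s. c s \<noteq> 0}. c s * Wword s w)"
  shows "(\<lambda>N. Lc N q P (\<lambda>_. 1) 0) \<longlonglongrightarrow> zIII q P"
proof -
  let ?Q = "\<lambda>r. \<exists>c :: nat list \<Rightarrow> rat. finite {s. c s \<noteq> 0} \<and> (\<forall>s. c s \<noteq> 0 \<longrightarrow> admissible s) \<and>
      P = (\<lambda>w. \<Sum>s\<in>{s. c s \<noteq> 0}. c s * Wword s w) \<and>
      r = (\<Sum>s\<in>{s. c s \<noteq> 0}. of_rat (c s) * zIII_series q s)"
  have "\<exists>r. ?Q r" using ex by blast
  then have "?Q (SOME r. ?Q r)" by (rule someI_ex)
  moreover have "zIII q P = (SOME r. ?Q r)" by (simp add: zIII_def)
  ultimately obtain c where c: "finite {s. c s \<noteq> 0}" "\<forall>s. c s \<noteq> 0 \<longrightarrow> admissible s"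
      "P = (\<lambda>w. \<Sum>s\<in>{s. c s \<noteq> 0}. c s * Wword s w)"
      "zIII q P = (\<Sum>s\<in>{s. c s \<noteq> 0}. of_rat (c s) * zIII_series q s)"
    by auto
  show ?thesis using Lc_repr_lim[OF q c(1) c(2) c(3)] c(4) by simp
qed

lemma rep_aux: "k \<ge> 1 \<Longrightarrow> replicate (k - 1) x @ [x] = replicate k x"
  by (cases k) (auto simp: replicate_append_same)

lemma rep_aux2: "k \<ge> 1 \<Longrightarrow> replicate (k - 1) x @ x # ys = replicate k x @ ys"
  by (cases k) (auto simp: replicate_append_same)

theorem theorem8p4:
  fixes q :: complex and l :: nat and \<alpha> \<beta> :: "nat \<Rightarrow> nat"
  assumes "norm q < 1"
    and "l \<ge> 1"
    and "\<forall>j\<in>{1..l}. \<alpha> j \<ge> 1 \<and> \<beta> j \<ge> 1"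
  shows "zIII q (ncprod ([ncpow (ncsub ncpi ncone) (\<alpha> 1 - 1), ncrho, ncpow ncy (\<beta> 1)]
            @ concat (map (\<lambda>j. [ncpow (ncsub ncpi ncone) (\<alpha> j), ncpow ncy (\<beta> j)]) [2..<l+1])))
       = zIII q (ncprod ([ncpow (ncsub ncpi ncone) (\<beta> l - 1), ncrho, ncpow ncy (\<alpha> l)]
            @ concat (map (\<lambda>j. [ncpow (ncsub ncpi ncone) (\<beta> j), ncpow ncy (\<alpha> j)]) (rev [1..<l]))))"
proof -
  have q: "norm q < 1" and l: "l \<ge> 1" and ab: "\<forall>j\<in>{1..l}. \<alpha> j \<ge> 1 \<and> \<beta> j \<ge> 1" using assms by auto
  let ?X = "bigP (\<alpha> 1) (\<beta> 1) \<alpha> \<beta> [2..<l+1]"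
  let ?D = "bigP (\<beta> l) (\<alpha> l) \<beta> \<alpha> (rev [1..<l])"
  have a1: "\<alpha> 1 \<ge> 1" "\<beta> 1 \<ge> 1" "\<alpha> l \<ge> 1" "\<beta> l \<ge> 1" using ab l by auto
  have rX: "\<forall>j\<in>set [2..<l+1]. \<beta> j \<ge> 1" using ab by auto
  have rD: "\<forall>j\<in>set (rev [1..<l]). \<alpha> j \<ge> 1" using ab by auto
  have limX: "(\<lambda>N. Lc N q ?X (\<lambda>_. 1) 0) \<longlonglongrightarrow> zIII q ?X"
    by (rule zIII_lim[OF q repr_bigP[OF a1(1) a1(2) rX]])
  have limD: "(\<lambda>N. Lc N q ?D (\<lambda>_. 1) 0) \<longlonglongrightarrow> zIII q ?D"
    by (rule zIII_lim[OF q repr_bigP[OF a1(4) a1(3) rD]])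
  define G where "G j = replicate (\<alpha> j) True @ replicate (\<beta> j) False" for j
  define H where "H j = replicate (\<beta> j) True @ replicate (\<alpha> j) False" for j
  have wX: "replicate (\<alpha> 1 - 1) True @ [True] @ replicate (\<beta> 1) False @ wrest \<alpha> \<beta> [2..<l+1]
      = concat (map G [1..<l+1])"
  proof -
    have "[1..<l+1] = 1 # [Suc 1..<l+1]" by (rule upt_conv_Cons) (use l in simp)
    then have "[1..<l+1] = 1 # [2..<l+1]" by (simp only: Suc_1)
    then show ?thesis using rep_aux2[OF a1(1)] by (simp del: upt_Suc add: wrest_def G_def[abs_def])
  qed
  have wD: "replicate (\<beta> l - 1) True @ [True] @ replicate (\<alpha> l) False @ wrest \<beta> \<alpha> (rev [1..<l])
      = concat (map H (rev [1..<l+1]))"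
  proof -
    have "rev [1..<l+1] = l # rev [1..<l]" using l by simp
    then show ?thesis using rep_aux2[OF a1(4)] by (simp del: upt_Suc add: wrest_def H_def[abs_def])
  qed
  have GH: "rev (map Not (concat (map G js))) = concat (map H (rev js))" for js
    by (induction js) (simp_all add: G_def H_def rev_map)
  have "Lc N q ?X (\<lambda>_. 1) 0 = Lc N q ?D (\<lambda>_. 1) 0" for N
  proof -
    have "Lc N q ?D (\<lambda>_. 1) 0 = QQ N q (concat (map H (rev [1..<l+1]))) 0 0"
      by (simp only: Lc_bigP QQ_def wD)
    also have "\<dots> = QQ N q (rev (map Not (concat (map G [1..<l+1])))) 0 0"
      by (simp only: GH)
    also have "\<dots> = QQ N q (concat (map G [1..<l+1])) 0 0"
      by (rule QQ_duality)
    also have "\<dots> = Lc N q ?X (\<lambda>_. 1) 0"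
      by (simp only: Lc_bigP QQ_def wX)
    finally show ?thesis by simp
  qed
  then have eqf: "(\<lambda>N. Lc N q ?X (\<lambda>_. 1) 0) = (\<lambda>N. Lc N q ?D (\<lambda>_. 1) 0)" by (rule ext)
  have "(\<lambda>N. Lc N q ?D (\<lambda>_. 1) 0) \<longlonglongrightarrow> zIII q ?X" using limX unfolding eqf .
  then have "zIII q ?X = zIII q ?D" using limD by (rule LIMSEQ_unique)
  then show ?thesis unfolding bigP_def .
qed


end
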